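(* Let $l\ge1$. For all $\alpha,\beta\ge1$, $\widetilde\epsilon_{t^l}(\mathcal{Q}_{\alpha,\beta})\subset\mathcal{P}_{\alpha',\beta'}$, where $\alpha'=\alpha+(n-1)l\beta$ and $\beta'=\beta$.
   Context: Let $k$ be a field of characteristic zero, $n\ge3$, $k[t,\mathbf{x}]=k[t,x_1,\ldots,x_n]$. Let $\widetilde D=\sum_{j=1}^{n-1}(n-j)\,x_{j+1}\,\partial/\partial x_j$ as a derivation of $k[t,\mathbf{x}]$ killing $t$, and $\widetilde\epsilon_{t^l}=\exp(t^l\widetilde D)$, $\exp E(g)=\sum_{i\ge0}E^i(g)/i!$. For nonzero $p=\sum u_{i_0,\ldots,i_n}t^{i_0}x_1^{i_1}\cdots x_n^{i_n}$, $\mathrm{supp}(p)$ is the set of exponent vectors with nonzero coefficient, $\deg_{\mathbf w}(p)=\max\{\sum_j i_jw_j:(i_0,\ldots,i_n)\in\mathrm{supp}(p)\}$, and $\mathrm{lt}(p)$ is the leading term for the lexicographic order with $t>x_1>\cdots>x_n$. Let $\mathbf{w}_1=(1,\ldots,1)$, $\mathbf{w}_2$ the weight with $n-2$ on $t$ and $2n-j-1$ on $x_j$, and $\mathbf{w}_3$ the weight with $0$ on $t$ and $1$ on each $x_j$. For $\alpha,\beta\ge1$: $\mathcal{P}_{\alpha,\beta}$ is the set of nonzero $p$ with $\deg_{\mathbf{w}_1}(p)\le\alpha+\beta$, $\deg_{\mathbf{w}_2}(p)\le(n-2)\alpha+(n-1)\beta$ and $\mathrm{lt}(p)\in k^*t^\alpha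 x_n^\beta$; $\mathcal{Q}_{\alpha,\beta}$ is the set of nonzero $p$ with $\deg_{\mathbf{w}_3}(p)\le\beta$ and $\mathrm{lt}(p)\in k^*t^\alpha x_1^\beta$. *)

theory Defs
  imports Main "HOL-Library.Poly_Mapping"
begin

text \<open>Exponent vectors are finitely supported maps nat =>0 nat;
index 0 is the variable t and index j (1 <= j <= n) is x_j.\<close>

type_synonym 'k mpoly = "(nat \<Rightarrow>\<^sub>0 nat) \<Rightarrow>\<^sub>0 'k"

definition in_ring :: "nat \<Rightarrow> 'k::zero mpoly \<Rightarrow> bool" where
  "in_ring n p \<longleftrightarrow> (\<forall>m\<in>Poly_Mapping.keys p. Poly_Mapping.keys m \<subseteq> {0..n})"

definition Var :: "nat \<Rightarrow> 'k::comm_ring_1 mpoly" where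
  "Var i = Poly_Mapping.single (Poly_Mapping.single i 1) 1"

definition Const :: "'k::comm_ring_1 \<Rightarrow> 'k mpoly" where
  "Const c = Poly_Mapping.single 0 c"

text \<open>The derivation Dtilde = sum_{j=1}^{n-1} (n-j) x_{j+1} d/dx_j (kills t),
defined on monomials and extended linearly.\<close>
definition Dtilde :: "nat \<Rightarrow> 'k::comm_ring_1 mpoly \<Rightarrow> 'k mpoly" where
  "Dtilde n p = (\<Sum>m\<in>Poly_Mapping.keys p. \<Sum>j\<in>{1..n-1}.
      Poly_Mapping.single (m - Poly_Mapping.single j 1 + Poly_Mapping.single (Suc j) 1)
        (of_nat ((n - j) * Poly_Mapping.lookup m j) * Poly_Mapping.lookup p m))"

text \<open>exp E (g) = sum_{i>=0} E^i(g)/i!, a sum with finitely many nonzero terms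
for locally nilpotent E (summation over the nonzero terms).\<close>
definition expE :: "('k::field_char_0 mpoly \<Rightarrow> 'k mpoly) \<Rightarrow> 'k mpoly \<Rightarrow> 'k mpoly" where
  "expE E g = (\<Sum>i\<in>{i. (E ^^ i) g \<noteq> 0}. Const (inverse (of_nat (fact i))) * (E ^^ i) g)"

definition eps :: "nat \<Rightarrow> nat \<Rightarrow> 'k::field_char_0 mpoly \<Rightarrow> 'k mpoly" where
  "eps n l = expE (\<lambda>g. Var 0 ^ l * Dtilde n g)"

definition wdeg :: "nat \<Rightarrow> (nat \<Rightarrow> nat) \<Rightarrow> 'k::zero mpoly \<Rightarrow> nat" where
  "wdeg n w p = Max ((\<lambda>m. \<Sum>j\<in>{0..n}. Poly_Mapping.lookup m j * w j) ` Poly_Mapping.keys p)"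

definition w1 :: "nat \<Rightarrow> nat" where "w1 j = 1"
definition w2 :: "nat \<Rightarrow> nat \<Rightarrow> nat" where
  "w2 n j = (if j = 0 then n - 2 else 2 * n - j - 1)"
definition w3 :: "nat \<Rightarrow> nat" where "w3 j = (if j = 0 then 0 else 1)"

definition lex_less :: "nat \<Rightarrow> (nat \<Rightarrow>\<^sub>0 nat) \<Rightarrow> (nat \<Rightarrow>\<^sub>0 nat) \<Rightarrow> bool" where
  "lex_less n m m' \<longleftrightarrow> (\<exists>i\<le>n. (\<forall>j<i. Poly_Mapping.lookup m j = Poly_Mapping.lookup m' j) \<and> Poly_Mapping.lookup m i < Poly_Mapping.lookup m' i)"

definition lt_is :: "nat \<Rightarrow> 'k::zero mpoly \<Rightarrow> (nat \<Rightarrow>\<^sub>0 nat) \<Rightarrow> bool" where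
  "lt_is n p e \<longleftrightarrow> e \<in> Poly_Mapping.keys p \<and> (\<forall>m\<in>Poly_Mapping.keys p. m \<noteq> e \<longrightarrow> lex_less n m e)"

definition Pset :: "nat \<Rightarrow> nat \<Rightarrow> nat \<Rightarrow> 'k::zero mpoly set" where
  "Pset n \<alpha> \<beta> = {p. in_ring n p \<and> p \<noteq> 0 \<and> wdeg n w1 p \<le> \<alpha> + \<beta>
     \<and> wdeg n (w2 n) p \<le> (n - 2) * \<alpha> + (n - 1) * \<beta>
     \<and> lt_is n p (Poly_Mapping.single 0 \<alpha> + Poly_Mapping.single n \<beta>)}"

definition Qset :: "nat \<Rightarrow> nat \<Rightarrow> nat \<Rightarrow> 'k::zero mpoly set" where
  "Qset n \<alpha> \<beta> = {p. in_ring n p \<and> p \<noteq> 0 \<and> wdeg n w3 p \<le> \<beta>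
     \<and> lt_is n p (Poly_Mapping.single 0 \<alpha> + Poly_Mapping.single 1 \<beta>)}"

end

theory Submission
  imports Defs
begin

abbreviation lk where "lk \<equiv> Poly_Mapping.lookup"
abbreviation sg where "sg \<equiv> Poly_Mapping.single"

lemma lookup_Const_mult: "lk (Const c * q) m = c * lk q m"
  unfolding Const_def mult_map_scale_conv_mult[symmetric]
  by (simp add: Poly_Mapping.map.rep_eq when_def)

lemma Var0_pow: "(Var 0 :: 'k::comm_ring_1 mpoly) ^ l = sg (sg 0 l) 1"
proof (induction l)
  case 0 then show ?case by (simp add: one_poly_mapping.abs_eq single.abs_eq)
next
  case (Suc l) then show ?case by (simp add: Var_def mult_single flip: single_add)
qed

lemma eq_shift_iff: "(x = sg (0::nat) (l::nat) + q) \<longleftrightarrow> (l \<le> lk x 0 \<and> q = x - sg 0 l)"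
  apply (auto simp: poly_mapping_eq_iff lookup_add lookup_minus lookup_single when_def fun_eq_iff)
  done

lemma lookup_Var0_mult: "lk ((Var 0 :: 'k::comm_ring_1 mpoly) ^ l * q) x
   = (if l \<le> lk x 0 then lk q (x - sg 0 l) else 0)"
proof -
  have 1: "(\<Sum>a. (if sg 0 l = a then (1::'k) else 0) * f a) = f (sg 0 l)" for f
  proof -
    have "(\<lambda>a. (if sg 0 l = a then (1::'k) else 0) * f a) = (\<lambda>a. if sg 0 l = a then f a else 0)"
      by auto
    then show ?thesis by (simp only: Sum_any.delta')
  qed
  have 2: "(\<Sum>aa. if x = sg 0 l + aa then lk q aa else (0::'k)) = (if l \<le> lk x 0 then lk q (x - sg 0 l) else 0)"
  proof (cases "l \<le> lk x 0")
    case True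
    then have "(\<lambda>aa. if x = sg 0 l + aa then lk q aa else (0::'k)) = (\<lambda>aa. if aa = x - sg 0 l then lk q aa else 0)"
      by (auto simp: eq_shift_iff)
    then show ?thesis using True by (simp only: Sum_any.delta if_True)
  next
    case False
    then have "(\<lambda>aa. if x = sg 0 l + aa then lk q aa else (0::'k)) = (\<lambda>aa. 0)"
      by (auto simp: eq_shift_iff)
    then show ?thesis using False by (simp only: Sum_any.neutral if_False)
  qed
  show ?thesis
    unfolding Var0_pow lookup_mult
    by (simp add: lookup_single when_def 1 2)
qed

lemma shift_back:
  assumes "1 \<le> lk m j" "m - sg j 1 + sg (Suc j) 1 = (x :: nat \<Rightarrow>\<^sub>0 nat)"
  shows "1 \<le> lk x (Suc j) \<and> m = x - sg (Suc j) 1 + sg j 1"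
proof -
  have x: "lk x k = lk m k - (if k = j then 1 else 0) + (if k = Suc j then 1 else 0)" for k
    using assms(2) by (auto simp: lookup_add lookup_minus lookup_single when_def)
  show ?thesis
    using assms(1) by (auto simp: poly_mapping_eq_iff fun_eq_iff lookup_add lookup_minus lookup_single when_def x)
qed

lemma shift_fwd:
  assumes "1 \<le> lk x (Suc j)"
  shows "(x - sg (Suc j) 1 + sg j 1) - sg j 1 + sg (Suc j) 1 = (x :: nat \<Rightarrow>\<^sub>0 nat)"
    "lk (x - sg (Suc j) 1 + sg j 1) j = lk x j + 1"
  using assms by (auto simp: poly_mapping_eq_iff fun_eq_iff lookup_add lookup_minus lookup_single when_def)

lemma lookup_Dtilde:
  "lk (Dtilde n q) x = (\<Sum>j\<in>{1..n-1}. if 1 \<le> lk x (Suc j)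
      then of_nat ((n-j) * (lk x j + 1)) * lk q (x - sg (Suc j) 1 + sg j 1) else 0)"
proof -
  have "lk (Dtilde n q) x = (\<Sum>j\<in>{1..n-1}. \<Sum>m\<in>Poly_Mapping.keys q.
      if m - sg j 1 + sg (Suc j) 1 = x then of_nat ((n - j) * lk m j) * lk q m else 0)"
    unfolding Dtilde_def lookup_sum lookup_single when_def
    by (rule sum.swap)
  also have "\<dots> = (\<Sum>j\<in>{1..n-1}. if 1 \<le> lk x (Suc j)
      then of_nat ((n-j) * (lk x j + 1)) * lk q (x - sg (Suc j) 1 + sg j 1) else 0)"
  proof (rule sum.cong[OF refl])
    fix j
    define \<mu> where "\<mu> = x - sg (Suc j) 1 + sg j 1"
    have eq: "(if m - sg j 1 + sg (Suc j) 1 = x then of_nat ((n - j) * lk m j) * lk q m else 0)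
       = (if m = \<mu> \<and> 1 \<le> lk x (Suc j) then of_nat ((n - j) * lk m j) * lk q m else 0)" for m
    proof (cases "lk m j = 0")
      case True then show ?thesis by (simp only: True mult_0_right mult_zero_left of_nat_0 if_cancel)
    next
      case False
      then have m1: "1 \<le> lk m j" by simp
      have iff: "(m - sg j 1 + sg (Suc j) 1 = x) \<longleftrightarrow> (m = \<mu> \<and> 1 \<le> lk x (Suc j))"
      proof
        assume "m - sg j 1 + sg (Suc j) 1 = x"
        then show "m = \<mu> \<and> 1 \<le> lk x (Suc j)" using shift_back[OF m1] unfolding \<mu>_def by blast
      next
        assume h: "m = \<mu> \<and> 1 \<le> lk x (Suc j)"
        then show "m - sg j 1 + sg (Suc j) 1 = x" using shift_fwd(1)[of x j] unfolding \<mu>_def by blast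
      qed
      show ?thesis by (simp only: iff)
    qed
    show "(\<Sum>m\<in>Poly_Mapping.keys q.
      if m - sg j 1 + sg (Suc j) 1 = x then of_nat ((n - j) * lk m j) * lk q m else 0) =
      (if 1 \<le> lk x (Suc j)
      then of_nat ((n-j) * (lk x j + 1)) * lk q (x - sg (Suc j) 1 + sg j 1) else 0)"
    proof (cases "1 \<le> lk x (Suc j)")
      case True
      have "(\<Sum>m\<in>Poly_Mapping.keys q.
        if m - sg j 1 + sg (Suc j) 1 = x then of_nat ((n - j) * lk m j) * lk q m else 0)
        = (\<Sum>m\<in>Poly_Mapping.keys q. if m = \<mu> then of_nat ((n - j) * lk m j) * lk q m else 0)"
        by (rule sum.cong[OF refl]) (simp only: eq True simp_thms)
      also have "\<dots> = (if \<mu> \<in> Poly_Mapping.keys q then of_nat ((n - j) * lk \<mu> j) * lk q \<mu> else 0)"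
        by (rule sum.delta) simp
      also have "\<dots> = of_nat ((n-j) * (lk x j + 1)) * lk q \<mu>"
        using shift_fwd(2)[OF True] unfolding \<mu>_def by (auto simp: in_keys_iff)
      finally show ?thesis using True unfolding \<mu>_def by simp
    next
      case False
      have "(\<Sum>m\<in>Poly_Mapping.keys q.
        if m - sg j 1 + sg (Suc j) 1 = x then of_nat ((n - j) * lk m j) * lk q m else 0) = 0"
        by (intro sum.neutral ballI) (simp only: eq False simp_thms if_False)
      then show ?thesis using False by simp
    qed
  qed
  finally show ?thesis .
qed

definition FF :: "nat \<Rightarrow> (nat \<Rightarrow> nat) \<Rightarrow> (nat \<Rightarrow>\<^sub>0 nat) \<Rightarrow> nat" where
  "FF n c m = (\<Sum>k\<in>{1..n}. c k * lk m k)"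

lemma FF_add: "FF n c (a + b) = FF n c a + FF n c b"
  by (simp add: FF_def lookup_add sum.distrib distrib_left)

lemma FF_single: "FF n c (sg k v) = (if k \<in> {1..n} then c k * v else 0)"
proof -
  have "(\<lambda>ka. c ka * (if k = ka then v else 0)) = (\<lambda>ka. if ka = k then c k * v else 0)" by auto
  have "FF n c (sg k v) = (\<Sum>ka\<in>{1..n}. if ka = k then c k * v else 0)"
    unfolding FF_def lookup_single when_def by (rule sum.cong[OF refl]) auto
  also have "\<dots> = (if k \<in> {1..n} then c k * v else 0)" by (rule sum.delta) simp
  finally show ?thesis .
qed

lemma R_iff: fixes m :: "nat \<Rightarrow>\<^sub>0 nat" shows "Poly_Mapping.keys m \<subseteq> {0..n} \<longleftrightarrow> (\<forall>k. n < k \<longrightarrow> lk m k = (0::nat))"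
  by (metis atLeastAtMost_iff le0 not_in_keys_iff_lookup_eq_zero not_le subsetD subsetI)

lemma step_facts:
  fixes x :: "nat \<Rightarrow>\<^sub>0 nat"
  assumes "l \<le> lk x 0" "1 \<le> j" "j \<le> n - 1" "1 \<le> lk (x - sg 0 l) (Suc j)" "n \<ge> 1"
  defines "\<mu> \<equiv> x - sg 0 l - sg (Suc j) 1 + sg j 1"
  shows "lk \<mu> 0 + l = lk x 0" "FF n c \<mu> + c (Suc j) = FF n c x + c j"
    "(\<forall>k. n < k \<longrightarrow> lk \<mu> k = 0) \<longleftrightarrow> (\<forall>k. n < k \<longrightarrow> lk x k = 0)"
proof -
  have lm: "lk \<mu> k = lk x k - (if k = 0 then l else 0) - (if k = Suc j then 1 else 0) + (if k = j then 1 else 0)" for k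
    by (simp add: \<mu>_def lookup_add lookup_minus lookup_single when_def)
  have "lk \<mu> 0 = lk x 0 - l" using lm[of 0] assms(2) by simp
  then show "lk \<mu> 0 + l = lk x 0" using assms(1) by linarith
  have e1: "\<mu> + sg (Suc j) 1 = (x - sg 0 l) + sg j 1"
    using assms(2,4) by (auto simp: poly_mapping_eq_iff fun_eq_iff lookup_add lookup_minus lookup_single when_def lm)
  have e2: "x = sg 0 l + (x - sg 0 l)" using assms(1) eq_shift_iff by blast
  have sj: "Suc j \<le> n" using assms(3,5) by arith
  have "FF n c \<mu> + c (Suc j) = FF n c (\<mu> + sg (Suc j) 1)"
    using assms(2,3,5) sj by (simp add: FF_add FF_single)
  also have "\<dots> = FF n c (x - sg 0 l) + c j"
    unfolding e1 using assms(2,3,5) sj by (simp add: FF_add FF_single)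
  also have "FF n c (x - sg 0 l) = FF n c x"
  proof -
    have "FF n c x = FF n c (sg 0 l) + FF n c (x - sg 0 l)" using e2 FF_add by metis
    moreover have "FF n c (sg 0 l) = 0" by (simp add: FF_single)
    ultimately show ?thesis by simp
  qed
  finally show "FF n c \<mu> + c (Suc j) = FF n c x + c j" .
  show "(\<forall>k. n < k \<longrightarrow> lk \<mu> k = 0) \<longleftrightarrow> (\<forall>k. n < k \<longrightarrow> lk x k = 0)"
  proof -
    have "lk \<mu> k = lk x k" if "n < k" for k
    proof -
      have "k \<noteq> 0" "k \<noteq> Suc j" "k \<noteq> j" using that sj assms(3) by auto
      then show ?thesis using lm[of k] by simp
    qed
    then show ?thesis by auto
  qed
qed

lemma I_le_X: "FF n (\<lambda>k. n - k) m \<le> (n - 1) * FF n (\<lambda>_. 1) m"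
  unfolding FF_def sum_distrib_left by (rule sum_mono) auto

lemma wsum_split: fixes m :: "nat \<Rightarrow>\<^sub>0 nat" and w :: "nat \<Rightarrow> nat" shows "(\<Sum>j\<in>{0..n}. lk m j * w j) = lk m 0 * w 0 + (\<Sum>j\<in>{1..n}. lk m j * w j)"
  using sum.atLeast_Suc_atMost[OF le0, of "\<lambda>j. lk m j * w j" n] by simp

lemma w3_sum: "(\<Sum>j\<in>{0..n}. lk m j * w3 j) = FF n (\<lambda>_. 1) m"
  unfolding wsum_split FF_def by (simp add: w3_def)

lemma w1_sum: "(\<Sum>j\<in>{0..n}. lk m j * w1 j) = lk m 0 + FF n (\<lambda>_. 1) m"
  unfolding wsum_split FF_def by (simp add: w1_def)

lemma w2_sum: "(\<Sum>j\<in>{0..n}. lk m j * w2 n j) = (n-2) * lk m 0 + (n - 1) * FF n (\<lambda>_. 1) m + FF n (\<lambda>k. n - k) m"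
proof -
  have "(\<Sum>j\<in>{1..n}. lk m j * w2 n j) = (\<Sum>j\<in>{1..n}. (n - 1) * lk m j + (n - j) * lk m j)"
    by (rule sum.cong) (auto simp: w2_def algebra_simps diff_mult_distrib diff_mult_distrib2)
  then show ?thesis unfolding wsum_split FF_def by (simp add: w2_def sum.distrib sum_distrib_left)
qed

lemma wdeg_le:
  assumes "\<And>m. m \<in> Poly_Mapping.keys p \<Longrightarrow> (\<Sum>j\<in>{0..n}. lk m j * w j) \<le> b" "p \<noteq> 0"
  shows "wdeg n w p \<le> b"
  unfolding wdeg_def using assms by (intro Max.boundedI) auto

lemma le_wdeg:
  assumes "m \<in> Poly_Mapping.keys p"
  shows "(\<Sum>j\<in>{0..n}. lk m j * w j) \<le> wdeg n w p"
  unfolding wdeg_def using assms by (intro Max_ge) auto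

lemma FF_shift0: "FF n c (x - sg 0 l) = FF n c x"
  unfolding FF_def by (rule sum.cong) (auto simp: lookup_minus lookup_single when_def)

lemma FF_split1: "n \<ge> 1 \<Longrightarrow> FF n c x = c 1 * lk x 1 + (\<Sum>k\<in>{2..n}. c k * lk x k)"
  unfolding FF_def using sum.atLeast_Suc_atMost[of 1 n "\<lambda>k. c k * lk x k"] by (simp add: numeral_2_eq_2)

lemma top0:
  assumes "n \<ge> 1" "FF n (\<lambda>k. n - k) x = (n - 1) * FF n (\<lambda>_. 1) x"
  shows "\<forall>k\<in>{2..n}. lk x k = 0"
proof -
  have "(\<Sum>k\<in>{1..n}. (n - k) * lk x k) + (\<Sum>k\<in>{1..n}. (k - 1) * lk x k) = (\<Sum>k\<in>{1..n}. (n - 1) * lk x k)"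
    unfolding sum.distrib[symmetric] by (rule sum.cong) (auto simp: add_mult_distrib[symmetric])
  then have "(\<Sum>k\<in>{1..n}. (k - 1) * lk x k) = 0" using assms(2) unfolding FF_def sum_distrib_left by simp
  then have h: "\<forall>a\<in>{1..n}. (a - 1) * lk x a = 0" by simp
  show ?thesis
  proof
    fix k assume k: "k \<in> {2..n}"
    then have "k \<in> {1..n}" by auto
    then have "(k - 1) * lk x k = 0" using h by blast
    then show "lk x k = 0" using k by auto
  qed
qed

lemma exists_pred:
  assumes "n \<ge> 1" "FF n (\<lambda>k. n - k) x < (n - 1) * FF n (\<lambda>_. 1) x"
  shows "\<exists>j\<in>{1..n-1}. 1 \<le> lk x (Suc j)"
proof (rule ccontr)
  assume "\<not> ?thesis"
  then have h: "\<And>j. j \<in> {1..n-1} \<Longrightarrow> lk x (Suc j) = 0" by (meson less_one not_le)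
  have z: "\<forall>k\<in>{2..n}. lk x k = 0"
  proof
    fix k assume k: "k \<in> {2..n}"
    then have "k - 1 \<in> {1..n-1}" "Suc (k - 1) = k" by auto
    then show "lk x k = 0" using h by metis
  qed
  have "FF n (\<lambda>k. n - k) x = (n - 1) * FF n (\<lambda>_. 1) x"
    using z assms(1) by (simp add: FF_split1)
  then show False using assms(2) by simp
qed

lemma topN:
  assumes "n \<ge> 1" "FF n (\<lambda>k. n - k) m = 0"
  shows "\<forall>k\<in>{1..n-1}. lk m k = 0" "FF n (\<lambda>_. 1) m = lk m n"
proof -
  have h: "\<forall>k\<in>{1..n}. (n - k) * lk m k = 0" using assms(2) unfolding FF_def by simp
  show z: "\<forall>k\<in>{1..n-1}. lk m k = 0"
  proof
    fix k assume k: "k \<in> {1..n-1}"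
    then have "k \<in> {1..n}" by auto
    then have "(n - k) * lk m k = 0" using h by blast
    then show "lk m k = 0" using k by auto
  qed
  have nn: "n = Suc (n - 1)" using assms(1) by simp
  have "FF n (\<lambda>_. 1) m = (\<Sum>k\<in>{1..n-1}. lk m k) + lk m n"
    unfolding FF_def by (subst nn, subst sum.cl_ivl_Suc) (use assms(1) in auto)
  then show "FF n (\<lambda>_. 1) m = lk m n" using z by simp
qed

context
  fixes n l \<alpha> \<beta> :: nat and p :: "'k::field_char_0 mpoly"
  assumes n3: "n \<ge> 3" and l1: "l \<ge> 1" and a1: "\<alpha> \<ge> 1" and b1: "\<beta> \<ge> 1"
    and pQ: "p \<in> Qset n \<alpha> \<beta>"
begin

lemma lookup_EE: "lk (((\<lambda>g. Var 0 ^ l * Dtilde n g) ^^ Suc i) p) x = (if l \<le> lk x 0 then lk (Dtilde n (((\<lambda>g. Var 0 ^ l * Dtilde n g) ^^ i) p)) (x - sg 0 l) else 0)"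
  by (simp add: lookup_Var0_mult)

lemma base_facts:
  assumes "lk p x \<noteq> 0"
  shows "(\<forall>k. n < k \<longrightarrow> lk x k = 0)" "FF n (\<lambda>_. 1) x \<le> \<beta>" "lk x 0 \<le> \<alpha>"
proof -
  have xk: "x \<in> Poly_Mapping.keys p" using assms by (simp add: in_keys_iff)
  show "\<forall>k. n < k \<longrightarrow> lk x k = 0" using pQ xk unfolding Qset_def in_ring_def R_iff[symmetric] by auto
  show "FF n (\<lambda>_. 1) x \<le> \<beta>" using pQ le_wdeg[OF xk, where n=n and w=w3] unfolding Qset_def w3_sum by auto
  have lt: "lt_is n p (sg (0::nat) \<alpha> + sg (1::nat) \<beta>)" using pQ unfolding Qset_def by auto
  have e0: "lk (sg (0::nat) \<alpha> + sg (1::nat) \<beta>) 0 = \<alpha>" by (simp add: lookup_add lookup_single when_def)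
  show "lk x 0 \<le> \<alpha>"
  proof (cases "x = (sg (0::nat) \<alpha> + sg (1::nat) \<beta>)")
    case True then show ?thesis using e0 by simp
  next
    case False
    then have "lex_less n x (sg (0::nat) \<alpha> + sg (1::nat) \<beta>)" using lt xk unfolding lt_is_def by auto
    then obtain i where i: "i \<le> n" "\<forall>j<i. lk x j = lk (sg (0::nat) \<alpha> + sg (1::nat) \<beta>) j" "lk x i < lk (sg (0::nat) \<alpha> + sg (1::nat) \<beta>) i"
      unfolding lex_less_def by auto
    show ?thesis
    proof (cases "i = 0")
      case True then show ?thesis using i e0 by simp
    next
      case False
      then have "lk x 0 = lk (sg (0::nat) \<alpha> + sg (1::nat) \<beta>) 0" using i(2) by blast
      then show ?thesis using e0 by simp
    qed
  qed
qed

lemma inv: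
  "lk (((\<lambda>g. Var 0 ^ l * Dtilde n g) ^^ i) p) x \<noteq> 0 \<Longrightarrow> (\<forall>k. n < k \<longrightarrow> lk x k = 0) \<and> FF n (\<lambda>_. 1) x \<le> \<beta> \<and> lk x 0 + l * FF n (\<lambda>k. n - k) x \<le> (\<alpha> + l * ((n - 1) * \<beta>))
    \<and> (lk x 0 + l * FF n (\<lambda>k. n - k) x = (\<alpha> + l * ((n - 1) * \<beta>)) \<longrightarrow> FF n (\<lambda>_. 1) x = \<beta>) \<and> lk x 0 \<le> \<alpha> + l * i \<and> FF n (\<lambda>k. n - k) x + i \<le> ((n - 1) * \<beta>)"
proof (induction i arbitrary: x)
  case 0
  then have nz: "lk p x \<noteq> 0" by simp
  note bf = base_facts[OF nz]
  have IN: "FF n (\<lambda>k. n - k) x \<le> ((n - 1) * \<beta>)" using I_le_X[of n x] bf(2)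
    by (meson le_trans mult_le_mono2)
  have lIN: "l * FF n (\<lambda>k. n - k) x \<le> l * ((n - 1) * \<beta>)" using IN by simp
  have eq: "FF n (\<lambda>_. 1) x = \<beta>" if "lk x 0 + l * FF n (\<lambda>k. n - k) x = (\<alpha> + l * ((n - 1) * \<beta>))"
  proof -
    have "l * ((n - 1) * \<beta>) \<le> l * FF n (\<lambda>k. n - k) x" using that bf(3) by linarith
    then have "((n - 1) * \<beta>) \<le> FF n (\<lambda>k. n - k) x" using l1 by simp
    then have "(n - 1) * \<beta> \<le> (n - 1) * FF n (\<lambda>_. 1) x" using I_le_X[of n x] by linarith
    then have "\<beta> \<le> FF n (\<lambda>_. 1) x" using n3 by simp
    then show ?thesis using bf(2) by simp
  qed
  have V: "lk x 0 + l * FF n (\<lambda>k. n - k) x \<le> (\<alpha> + l * ((n - 1) * \<beta>))" using bf(3) lIN by linarith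
  show ?case using bf IN V eq by simp
next
  case (Suc i)
  have l0: "l \<le> lk x 0" using Suc.prems unfolding lookup_EE by (auto split: if_splits)
  have "lk (Dtilde n (((\<lambda>g. Var 0 ^ l * Dtilde n g) ^^ i) p)) (x - sg 0 l) \<noteq> 0" using Suc.prems l0 unfolding lookup_EE by simp
  then obtain j where j0: "j \<in> {1..n-1}" "(if 1 \<le> lk (x - sg 0 l) (Suc j)
      then of_nat ((n-j) * (lk (x - sg 0 l) j + 1)) * lk (((\<lambda>g. Var 0 ^ l * Dtilde n g) ^^ i) p) (x - sg 0 l - sg (Suc j) 1 + sg j 1) else 0) \<noteq> (0::'k)"
    unfolding lookup_Dtilde using sum.not_neutral_contains_not_neutral by blast
  then have j: "j \<in> {1..n-1}" "1 \<le> lk (x - sg 0 l) (Suc j)"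
      "lk (((\<lambda>g. Var 0 ^ l * Dtilde n g) ^^ i) p) (x - sg 0 l - sg (Suc j) 1 + sg j 1) \<noteq> 0"
    by (auto split: if_splits)
  define \<mu> where "\<mu> = x - sg 0 l - sg (Suc j) 1 + sg j 1"
  have IH: "(\<forall>k. n < k \<longrightarrow> lk \<mu> k = 0) \<and> FF n (\<lambda>_. 1) \<mu> \<le> \<beta> \<and> lk \<mu> 0 + l * FF n (\<lambda>k. n - k) \<mu> \<le> (\<alpha> + l * ((n - 1) * \<beta>))
    \<and> (lk \<mu> 0 + l * FF n (\<lambda>k. n - k) \<mu> = (\<alpha> + l * ((n - 1) * \<beta>)) \<longrightarrow> FF n (\<lambda>_. 1) \<mu> = \<beta>) \<and> lk \<mu> 0 \<le> \<alpha> + l * i \<and> FF n (\<lambda>k. n - k) \<mu> + i \<le> ((n - 1) * \<beta>)"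
    using Suc.IH j(3) unfolding \<mu>_def by blast
  have n1: "n \<ge> 1" using n3 by simp
  have s0: "lk \<mu> 0 + l = lk x 0" and sX: "FF n (\<lambda>_. 1) \<mu> + 1 = FF n (\<lambda>_. 1) x + 1" and sI: "FF n (\<lambda>k. n - k) \<mu> + (n - Suc j) = FF n (\<lambda>k. n - k) x + (n - j)"
    and sR: "(\<forall>k. n < k \<longrightarrow> lk \<mu> k = 0) \<longleftrightarrow> (\<forall>k. n < k \<longrightarrow> lk x k = 0)"
    using step_facts(1,3)[OF l0 _ _ j(2) n1] step_facts(2)[OF l0 _ _ j(2) n1, of "\<lambda>_. 1"] step_facts(2)[OF l0 _ _ j(2) n1, of "\<lambda>k. n - k"] j(1)
    unfolding \<mu>_def by auto
  have sI': "FF n (\<lambda>k. n - k) \<mu> = FF n (\<lambda>k. n - k) x + 1" using sI j(1) by auto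
  have lI: "l * FF n (\<lambda>k. n - k) \<mu> = l * FF n (\<lambda>k. n - k) x + l" using sI' by simp
  have V: "lk x 0 + l * FF n (\<lambda>k. n - k) x = lk \<mu> 0 + l * FF n (\<lambda>k. n - k) \<mu>" using s0 lI by linarith
  have X: "FF n (\<lambda>_. 1) x = FF n (\<lambda>_. 1) \<mu>" using sX by linarith
  have T: "lk x 0 \<le> \<alpha> + l * Suc i" using s0 IH by simp
  have II: "FF n (\<lambda>k. n - k) x + Suc i \<le> (n - 1) * \<beta>" using sI' IH by linarith
  have R: "\<forall>k. n < k \<longrightarrow> lk x k = 0" using sR IH by blast
  show ?case using IH V X T II R by (simp only:) simp
qed


lemma pos:
  "i \<le> ((n - 1) * \<beta>) \<Longrightarrow> (\<forall>k. n < k \<longrightarrow> lk x k = 0) \<Longrightarrow> lk x 0 = \<alpha> + l * i \<Longrightarrow> FF n (\<lambda>_. 1) x = \<beta>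
   \<Longrightarrow> FF n (\<lambda>k. n - k) x + i = (n - 1) * \<beta>
   \<Longrightarrow> \<exists>c>0. lk (((\<lambda>g. Var 0 ^ l * Dtilde n g) ^^ i) p) x = of_nat c * lk p (sg (0::nat) \<alpha> + sg (1::nat) \<beta>)"
proof (induction i arbitrary: x)
  case 0
  have n1: "n \<ge> 1" using n3 by simp
  have z: "\<forall>k\<in>{2..n}. lk x k = 0" using top0[OF n1, of x] 0 by simp
  have x1: "lk x 1 = \<beta>" using 0(4) z n1 by (simp add: FF_split1)
  have "x = sg (0::nat) \<alpha> + sg (1::nat) \<beta>"
  proof (rule poly_mapping_eqI)
    fix k
    show "lk x k = lk (sg (0::nat) \<alpha> + sg (1::nat) \<beta>) k"
      using 0(2,3) z x1 by (cases "k = 0"; cases "k = 1"; cases "k \<le> n")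
        (auto simp: lookup_add lookup_single when_def)
  qed
  then show ?case by (intro exI[of _ 1]) simp
next
  case (Suc i)
  have n1: "n \<ge> 1" using n3 by simp
  have l0: "l \<le> lk x 0" using Suc.prems(3) by simp
  define x2 where "x2 = x - sg 0 l"
  have X2: "FF n c x2 = FF n c x" for c unfolding x2_def by (rule FF_shift0)
  define \<mu> where "\<mu> j = x2 - sg (Suc j) 1 + sg j 1" for j
  have mu: "(\<forall>k. n < k \<longrightarrow> lk (\<mu> j) k = 0) \<and> lk (\<mu> j) 0 = \<alpha> + l * i \<and> FF n (\<lambda>_. 1) (\<mu> j) = \<beta>
     \<and> FF n (\<lambda>k. n - k) (\<mu> j) + i = (n - 1) * \<beta>"
    if j: "j \<in> {1..n-1}" "1 \<le> lk x2 (Suc j)" for j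
  proof -
    have s0: "lk (\<mu> j) 0 + l = lk x 0" and sX: "FF n (\<lambda>_. 1) (\<mu> j) + 1 = FF n (\<lambda>_. 1) x + 1"
      and sI: "FF n (\<lambda>k. n - k) (\<mu> j) + (n - Suc j) = FF n (\<lambda>k. n - k) x + (n - j)"
      and sR: "(\<forall>k. n < k \<longrightarrow> lk (\<mu> j) k = 0) \<longleftrightarrow> (\<forall>k. n < k \<longrightarrow> lk x k = 0)"
      using step_facts(1,3)[OF l0 _ _ j(2)[unfolded x2_def] n1] step_facts(2)[OF l0 _ _ j(2)[unfolded x2_def] n1, of "\<lambda>_. 1"]
        step_facts(2)[OF l0 _ _ j(2)[unfolded x2_def] n1, of "\<lambda>k. n - k"] j(1)
      unfolding \<mu>_def x2_def by auto
    have "FF n (\<lambda>k. n - k) (\<mu> j) = FF n (\<lambda>k. n - k) x + 1" using sI j(1) by auto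
    then show ?thesis using s0 sX sR Suc.prems by auto
  qed
  have "\<forall>j\<in>{1..n-1}. \<exists>c. 1 \<le> lk x2 (Suc j) \<longrightarrow> c > 0 \<and>
      lk (((\<lambda>g. Var 0 ^ l * Dtilde n g) ^^ i) p) (\<mu> j) = of_nat c * lk p (sg (0::nat) \<alpha> + sg (1::nat) \<beta>)"
  proof
    fix j assume j: "j \<in> {1..n-1}"
    show "\<exists>c. 1 \<le> lk x2 (Suc j) \<longrightarrow> c > 0 \<and>
      lk (((\<lambda>g. Var 0 ^ l * Dtilde n g) ^^ i) p) (\<mu> j) = of_nat c * lk p (sg (0::nat) \<alpha> + sg (1::nat) \<beta>)"
    proof (cases "1 \<le> lk x2 (Suc j)")
      case True
      then show ?thesis using Suc.IH[of "\<mu> j"] mu[OF j True] Suc.prems(1) by auto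
    qed auto
  qed
  then obtain cf where cf: "\<And>j. j \<in> {1..n-1} \<Longrightarrow> 1 \<le> lk x2 (Suc j) \<Longrightarrow> cf j > 0 \<and>
      lk (((\<lambda>g. Var 0 ^ l * Dtilde n g) ^^ i) p) (\<mu> j) = of_nat (cf j) * lk p (sg (0::nat) \<alpha> + sg (1::nat) \<beta>)"
    by metis
  define d where "d j = (if 1 \<le> lk x2 (Suc j) then (n - j) * (lk x2 j + 1) * cf j else 0)" for j
  have "lk (((\<lambda>g. Var 0 ^ l * Dtilde n g) ^^ Suc i) p) x
      = (\<Sum>j\<in>{1..n-1}. if 1 \<le> lk x2 (Suc j)
      then of_nat ((n-j) * (lk x2 j + 1)) * lk (((\<lambda>g. Var 0 ^ l * Dtilde n g) ^^ i) p) (\<mu> j) else 0)"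
    using l0 unfolding lookup_EE lookup_Dtilde x2_def \<mu>_def by simp
  also have "\<dots> = (\<Sum>j\<in>{1..n-1}. of_nat (d j) * lk p (sg (0::nat) \<alpha> + sg (1::nat) \<beta>))"
    by (rule sum.cong) (auto simp: d_def cf)
  also have "\<dots> = of_nat (\<Sum>j\<in>{1..n-1}. d j) * lk p (sg (0::nat) \<alpha> + sg (1::nat) \<beta>)"
    by (simp add: sum_distrib_right)
  finally have eq: "lk (((\<lambda>g. Var 0 ^ l * Dtilde n g) ^^ Suc i) p) x = of_nat (\<Sum>j\<in>{1..n-1}. d j) * lk p (sg (0::nat) \<alpha> + sg (1::nat) \<beta>)" .
  have "FF n (\<lambda>k. n - k) x2 < (n - 1) * FF n (\<lambda>_. 1) x2" using X2 Suc.prems(4,5) by simp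
  then obtain j0 where j0: "j0 \<in> {1..n-1}" "1 \<le> lk x2 (Suc j0)" using exists_pred n1 by blast
  have "d j0 > 0" using j0 cf[OF j0] unfolding d_def by auto
  moreover have "d j0 \<le> (\<Sum>j\<in>{1..n-1}. d j)" using j0(1) by (intro member_le_sum) auto
  ultimately show ?case using eq by (intro exI[of _ "\<Sum>j\<in>{1..n-1}. d j"]) auto
qed


lemma pe_nz: "lk p (sg (0::nat) \<alpha> + sg (1::nat) \<beta>) \<noteq> 0"
  using pQ unfolding Qset_def lt_is_def by (auto simp: in_keys_iff)

lemma E_zero: "i > (n - 1) * \<beta> \<Longrightarrow> ((\<lambda>g. Var 0 ^ l * Dtilde n g) ^^ i) p = 0"
  by (rule poly_mapping_eqI) (use inv in fastforce)

lemma eps_eq: "eps n l p = (\<Sum>i\<in>{..(n - 1) * \<beta>}. Const (inverse (of_nat (fact i))) * ((\<lambda>g. Var 0 ^ l * Dtilde n g) ^^ i) p)"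
  unfolding eps_def expE_def
proof (rule sum.mono_neutral_left)
  show "{i. ((\<lambda>g. Var 0 ^ l * Dtilde n g) ^^ i) p \<noteq> 0} \<subseteq> {..(n - 1) * \<beta>}"
    using E_zero by (auto simp: not_le[symmetric])
qed auto

lemma lk_eps: "lk (eps n l p) x = (\<Sum>i\<in>{..(n - 1) * \<beta>}. inverse (of_nat (fact i)) * lk (((\<lambda>g. Var 0 ^ l * Dtilde n g) ^^ i) p) x)"
  unfolding eps_eq lookup_sum lookup_Const_mult ..

lemma keys_eps: "lk (eps n l p) x \<noteq> 0 \<Longrightarrow> \<exists>i. lk (((\<lambda>g. Var 0 ^ l * Dtilde n g) ^^ i) p) x \<noteq> 0"
  unfolding lk_eps using sum.not_neutral_contains_not_neutral by force

lemma main: "eps n l p \<in> Pset n (\<alpha> + (n - 1) * l * \<beta>) \<beta>"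
proof -
  let ?E = "\<lambda>g. Var 0 ^ l * Dtilde n g"
  let ?N = "(n - 1) * \<beta>"
  let ?A = "\<alpha> + l * ((n - 1) * \<beta>)"
  define e' where "e' = sg (0::nat) ?A + sg n \<beta>"
  have n1: "n \<ge> 1" using n3 by simp
  have AA: "\<alpha> + (n - 1) * l * \<beta> = ?A" by (simp add: ac_simps)
  have e'0: "lk e' 0 = ?A" using n1 by (simp add: e'_def lookup_add lookup_single when_def)
  have e'R: "\<forall>k. n < k \<longrightarrow> lk e' k = 0" by (simp add: e'_def lookup_add lookup_single when_def)
  have e'X: "FF n (\<lambda>_. 1) e' = \<beta>" using n1 by (simp add: e'_def FF_add FF_single)
  have e'I: "FF n (\<lambda>k. n - k) e' = 0" using n1 by (simp add: e'_def FF_add FF_single)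
  obtain c where c: "c > 0" "lk ((?E ^^ ?N) p) e' = of_nat c * lk p (sg (0::nat) \<alpha> + sg (1::nat) \<beta>)"
    using pos[of ?N e'] e'0 e'R e'X e'I by auto
  have other: "lk ((?E ^^ i) p) e' = 0" if "i \<noteq> ?N" for i
  proof (rule ccontr)
    assume "lk ((?E ^^ i) p) e' \<noteq> 0"
    from inv[OF this] e'0 e'I have "?A \<le> \<alpha> + l * i" "i \<le> ?N" by auto
    then have "l * ?N \<le> l * i" by simp
    then have "?N \<le> i" using l1 by simp
    then show False using \<open>i \<le> ?N\<close> that by simp
  qed
  have "lk (eps n l p) e' = (\<Sum>i\<in>{?N}. inverse (of_nat (fact i)) * lk ((?E ^^ i) p) e')"
    unfolding lk_eps by (rule sum.mono_neutral_right) (auto simp: other)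
  also have "\<dots> = inverse (of_nat (fact ?N)) * (of_nat c * lk p (sg (0::nat) \<alpha> + sg (1::nat) \<beta>))"
    using c by simp
  finally have e'nz: "lk (eps n l p) e' \<noteq> 0" using c(1) pe_nz by simp
  have props: "(\<forall>k. n < k \<longrightarrow> lk m k = 0) \<and> FF n (\<lambda>_. 1) m \<le> \<beta> \<and> lk m 0 + l * FF n (\<lambda>k. n - k) m \<le> ?A
    \<and> (lk m 0 + l * FF n (\<lambda>k. n - k) m = ?A \<longrightarrow> FF n (\<lambda>_. 1) m = \<beta>)"
    if mk: "m \<in> Poly_Mapping.keys (eps n l p)" for m
  proof -
    have "lk (eps n l p) m \<noteq> 0" using mk by (metis in_keys_iff)
    then obtain i where "lk ((?E ^^ i) p) m \<noteq> 0" using keys_eps by blast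
    from inv[OF this] show ?thesis by blast
  qed
  have nz: "eps n l p \<noteq> 0" using e'nz by auto
  have lt: "lk m 0 < ?A" if m: "m \<in> Poly_Mapping.keys (eps n l p)" "m \<noteq> e'" for m
  proof (rule ccontr)
    assume "\<not> ?thesis"
    then have eqA: "lk m 0 = ?A" using props[OF m(1)] by linarith
    then have "l * FF n (\<lambda>k. n - k) m = 0" using props[OF m(1)] by linarith
    then have I0: "FF n (\<lambda>k. n - k) m = 0" using l1 by simp
    have X: "FF n (\<lambda>_. 1) m = \<beta>" using props[OF m(1)] eqA I0 by simp
    note tN = topN[OF n1 I0]
    have "m = e'"
    proof (rule poly_mapping_eqI)
      fix k
      show "lk m k = lk e' k"
      proof (cases "k = 0")
        case True then show ?thesis using eqA e'0 by simp
      next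
        case k0: False
        show ?thesis
        proof (cases "n < k")
          case True then show ?thesis using props[OF m(1)] e'R by simp
        next
          case False
          show ?thesis
          proof (cases "k = n")
            case True then show ?thesis using tN(2) X n1 by (simp add: e'_def lookup_add lookup_single when_def)
          next
            case False
            then have "k \<in> {1..n-1}" using k0 \<open>\<not> n < k\<close> by auto
            then show ?thesis using tN(1) k0 False by (simp add: e'_def lookup_add lookup_single when_def)
          qed
        qed
      qed
    qed
    then show False using m(2) by simp
  qed
  have in_ring: "in_ring n (eps n l p)"
    unfolding in_ring_def R_iff using props by blast
  have w1: "wdeg n w1 (eps n l p) \<le> ?A + \<beta>"
  proof (rule wdeg_le[OF _ nz])
    fix m assume m: "m \<in> Poly_Mapping.keys (eps n l p)"
    show "(\<Sum>j\<in>{0..n}. lk m j * w1 j) \<le> ?A + \<beta>" unfolding w1_sum using props[OF m] by linarith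
  qed
  have w2: "wdeg n (w2 n) (eps n l p) \<le> (n - 2) * ?A + (n - 1) * \<beta>"
  proof (rule wdeg_le[OF _ nz])
    fix m assume m: "m \<in> Poly_Mapping.keys (eps n l p)"
    note pm = props[OF m]
    have nl: "1 \<le> (n - 2) * l" using n3 l1 by (simp add: Suc_le_eq)
    have "FF n (\<lambda>k. n - k) m \<le> ((n - 2) * l) * FF n (\<lambda>k. n - k) m" using nl by simp
    then have "(n - 2) * lk m 0 + FF n (\<lambda>k. n - k) m \<le> (n - 2) * (lk m 0 + l * FF n (\<lambda>k. n - k) m)"
      by (simp add: algebra_simps)
    also have "\<dots> \<le> (n - 2) * ?A" using pm by (intro mult_le_mono2) linarith
    finally have 1: "(n - 2) * lk m 0 + FF n (\<lambda>k. n - k) m \<le> (n - 2) * ?A" .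
    have 2: "(n - 1) * FF n (\<lambda>_. 1) m \<le> (n - 1) * \<beta>" using pm by simp
    show "(\<Sum>j\<in>{0..n}. lk m j * w2 n j) \<le> (n - 2) * ?A + (n - 1) * \<beta>"
      unfolding w2_sum using 1 2 by linarith
  qed
  have ltis: "lt_is n (eps n l p) (sg 0 ?A + sg n \<beta>)"
    unfolding lt_is_def lex_less_def
  proof
    show "sg 0 ?A + sg n \<beta> \<in> Poly_Mapping.keys (eps n l p)" using e'nz by (simp add: e'_def in_keys_iff)
    show "\<forall>m\<in>Poly_Mapping.keys (eps n l p). m \<noteq> sg 0 ?A + sg n \<beta> \<longrightarrow>
        (\<exists>i\<le>n. (\<forall>j<i. lk m j = lk (sg 0 ?A + sg n \<beta>) j) \<and> lk m i < lk (sg 0 ?A + sg n \<beta>) i)"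
      using lt e'0 unfolding e'_def by (intro ballI impI exI[of _ 0]) auto
  qed
  show ?thesis unfolding Pset_def AA using in_ring nz w1 w2 ltis by simp
qed

end


theorem lemma5p3:
  fixes n l \<alpha> \<beta> :: nat and p :: "'k::field_char_0 mpoly"
  assumes "n \<ge> 3" and "l \<ge> 1" and "\<alpha> \<ge> 1" and "\<beta> \<ge> 1"
    and "p \<in> Qset n \<alpha> \<beta>"
  shows "eps n l p \<in> Pset n (\<alpha> + (n - 1) * l * \<beta>) \<beta>"
  using assms by (rule main)

end
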